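(* Let $\mathbb{F}$ be an algebraically closed field, $\mathbf{O}$ the split octonion algebra over $\mathbb{F}$, and $T_n\subseteq \mathbb{F}[\mathbf{O}^n]$ the algebra of trace ${\rm G}_2$-invariants. Let $w$ be a (non-associative) word in the letters $x_1,\ldots,x_n$ and write $\mathrm{tr}(w)$ for the function $\underline{a}\mapsto \mathrm{tr}(w(a_1,\ldots,a_n))$ on $\mathbf{O}^n$. For $1\le i_1,\ldots,i_k\le n$ write $\mathrm{tr}(i_1,\ldots,i_k)$ for the function $\underline{a}\mapsto\mathrm{tr}((\cdots((a_{i_1}a_{i_2})a_{i_3})\cdots)a_{i_k})$. Then: 1. If $w$ is not multilinear and $\deg(w)>2$, then $\mathrm{tr}(w)\equiv 0$ in $T_n$. 2. If $w$ is multilinear and is a product of the letters $x_{i_1},\ldots,x_{i_k}$ with $1\le i_1<\cdots<i_k\le n$, then $\mathrm{tr}(w)\equiv \pm\,\mathrm{tr}(i_1,\ldots,i_k)$ in $T_n$. 3. For all $1\le i_1<\cdots<i_k\le n$ with $k\ge 3$ and every permutation $\sigma\in\mathcal{S}_k$, $\mathrm{tr}(i_{\sigma(1)},\ldots,i_{\sigma(k)})\equiv (-1)^{\sigma}\,\mathrm{tr}(i_1,\ldots,i_k)$ in $T_n$.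
   Context: The split octonion algebra $\mathbf{O}$ is the 8-dimensional $\mathbb{F}$-vector space of formal matrices $a=\begin{pmatrix}\alpha&\mathbf{u}\\ \mathbf{v}&\beta\end{pmatrix}$ with $\alpha,\beta\in\mathbb{F}$, $\mathbf{u},\mathbf{v}\in\mathbb{F}^3$, with multiplication $\begin{pmatrix}\alpha&\mathbf{u}\\ \mathbf{v}&\beta\end{pmatrix}\begin{pmatrix}\alpha'&\mathbf{u}'\\ \mathbf{v}'&\beta'\end{pmatrix}=\begin{pmatrix}\alpha\alpha'+\mathbf{u}\cdot\mathbf{v}'&\alpha\mathbf{u}'+\beta'\mathbf{u}-\mathbf{v}\times\mathbf{v}'\\ \alpha'\mathbf{v}+\beta\mathbf{v}'+\mathbf{u}\times\mathbf{u}'&\beta\beta'+\mathbf{v}\cdot\mathbf{u}'\end{pmatrix}$ (dot product and cross product on $\mathbb{F}^3$). Trace $\mathrm{tr}(a)=\alpha+\beta$, norm $n(a)=\alpha\beta-\mathbf{u}\cdot\mathbf{v}$. ${\rm G}_2=\mathrm{Aut}(\mathbf{O})$. The algebra $T_n$ of trace ${\rm G}_2$-invariants is the subalgebra of the polynomial ring $\mathbb{F}[\mathbf{O}^n]$ generated by the functions $\underline{a}\mapsto n(a_i)$ ($1\le i\le n$) and $\underline{a}\mapsto\mathrm{tr}(w(a_1,\ldots,a_n))$ for all non-empty non-associative words $w$ in $x_1,\ldots,x_n$. $T_n$ is graded by total degree (the function $\mathrm{tr}(w)$ has degree the number of letters of $w$, $n(a_i)$ has degree 2); $T_n^+$ denotes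 the span of homogeneous elements of positive degree, and $f\equiv h$ in $T_n$ means $f-h\in (T_n^+)^2$. A word is multilinear if each letter occurs in it at most once. *)

theory Defs
  imports "HOL-Computational_Algebra.Polynomial" "HOL-Combinatorics.Permutations"
begin

definition alg_closed :: "'a::field itself \<Rightarrow> bool" where
  "alg_closed _ \<longleftrightarrow> (\<forall>p :: 'a poly. degree p > 0 \<longrightarrow> (\<exists>x. poly p x = 0))"

type_synonym 'a vec3 = "'a \<times> 'a \<times> 'a"

definition dot3 :: "'a::comm_ring vec3 \<Rightarrow> 'a vec3 \<Rightarrow> 'a" where
  "dot3 u v = (case u of (u1,u2,u3) \<Rightarrow> case v of (v1,v2,v3) \<Rightarrow> u1*v1 + u2*v2 + u3*v3)"

definition cross3 :: "'a::comm_ring vec3 \<Rightarrow> 'a vec3 \<Rightarrow> 'a vec3" where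
  "cross3 u v = (case u of (u1,u2,u3) \<Rightarrow> case v of (v1,v2,v3) \<Rightarrow>
     (u2*v3 - u3*v2, u3*v1 - u1*v3, u1*v2 - u2*v1))"

definition sc3 :: "'a::comm_ring \<Rightarrow> 'a vec3 \<Rightarrow> 'a vec3" where
  "sc3 c u = (case u of (u1,u2,u3) \<Rightarrow> (c*u1, c*u2, c*u3))"

definition add3 :: "'a::comm_ring vec3 \<Rightarrow> 'a vec3 \<Rightarrow> 'a vec3" where
  "add3 u v = (case u of (u1,u2,u3) \<Rightarrow> case v of (v1,v2,v3) \<Rightarrow> (u1+v1, u2+v2, u3+v3))"

definition sub3 :: "'a::comm_ring vec3 \<Rightarrow> 'a vec3 \<Rightarrow> 'a vec3" where
  "sub3 u v = (case u of (u1,u2,u3) \<Rightarrow> case v of (v1,v2,v3) \<Rightarrow> (u1-v1, u2-v2, u3-v3))"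

text \<open>The formal matrix with entries alpha (top left), u (top right), v (bottom left),
  beta (bottom right).\<close>
datatype 'a oct = Oct (oalpha: 'a) (ou: "'a vec3") (ov: "'a vec3") (obeta: 'a)

definition omult :: "'a::comm_ring oct \<Rightarrow> 'a oct \<Rightarrow> 'a oct" where
  "omult a b = Oct
     (oalpha a * oalpha b + dot3 (ou a) (ov b))
     (sub3 (add3 (sc3 (oalpha a) (ou b)) (sc3 (obeta b) (ou a))) (cross3 (ov a) (ov b)))
     (add3 (add3 (sc3 (oalpha b) (ov a)) (sc3 (obeta a) (ov b))) (cross3 (ou a) (ou b)))
     (obeta a * obeta b + dot3 (ov a) (ou b))"

definition otr :: "'a::comm_ring oct \<Rightarrow> 'a" where
  "otr a = oalpha a + obeta a"

definition onorm :: "'a::comm_ring oct \<Rightarrow> 'a" where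
  "onorm a = oalpha a * obeta a - dot3 (ou a) (ov a)"

definition osmult :: "'a::comm_ring \<Rightarrow> 'a oct \<Rightarrow> 'a oct" where
  "osmult c a = Oct (c * oalpha a) (sc3 c (ou a)) (sc3 c (ov a)) (c * obeta a)"

datatype word = Var nat | Mul word word

fun letters :: "word \<Rightarrow> nat list" where
  "letters (Var i) = [i]"
| "letters (Mul w1 w2) = letters w1 @ letters w2"

definition deg :: "word \<Rightarrow> nat" where
  "deg w = length (letters w)"

definition multilinear :: "word \<Rightarrow> bool" where
  "multilinear w \<longleftrightarrow> distinct (letters w)"

text \<open>Points of O^n are tuples a = (a_1,...,a_n), represented as functions on indices;
  only the indices 1..n are used.\<close>
type_synonym 'a point = "nat \<Rightarrow> 'a oct"

fun oeval :: "'a::comm_ring point \<Rightarrow> word \<Rightarrow> 'a oct" where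
  "oeval a (Var i) = a i"
| "oeval a (Mul w1 w2) = omult (oeval a w1) (oeval a w2)"

definition trw :: "word \<Rightarrow> 'a::comm_ring point \<Rightarrow> 'a" where
  "trw w = (\<lambda>a. otr (oeval a w))"

fun lnword :: "nat list \<Rightarrow> word" where
  "lnword [] = Var 0"
| "lnword (i # is) = foldl (\<lambda>w j. Mul w (Var j)) (Var i) is"

definition trl :: "nat list \<Rightarrow> 'a::comm_ring point \<Rightarrow> 'a" where
  "trl is = trw (lnword is)"

inductive_set Tn :: "nat \<Rightarrow> ('a::field point \<Rightarrow> 'a) set" for n where
  const: "(\<lambda>_. c) \<in> Tn n"
| normgen: "1 \<le> i \<Longrightarrow> i \<le> n \<Longrightarrow> (\<lambda>a. onorm (a i)) \<in> Tn n"
| trgen: "set (letters w) \<subseteq> {1..n} \<Longrightarrow> trw w \<in> Tn n"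
| add: "f \<in> Tn n \<Longrightarrow> g \<in> Tn n \<Longrightarrow> (\<lambda>a. f a + g a) \<in> Tn n"
| mult: "f \<in> Tn n \<Longrightarrow> g \<in> Tn n \<Longrightarrow> (\<lambda>a. f a * g a) \<in> Tn n"

text \<open>Homogeneity of degree d (polynomial functions over an infinite field).\<close>
definition homogeneous :: "nat \<Rightarrow> ('a::field point \<Rightarrow> 'a) \<Rightarrow> bool" where
  "homogeneous d f \<longleftrightarrow> (\<forall>t a. f (\<lambda>i. osmult t (a i)) = t ^ d * f a)"

inductive_set Tplus :: "nat \<Rightarrow> ('a::field point \<Rightarrow> 'a) set" for n where
  zero: "(\<lambda>_. 0) \<in> Tplus n"
| hom: "f \<in> Tn n \<Longrightarrow> 0 < d \<Longrightarrow> homogeneous d f \<Longrightarrow> f \<in> Tplus n"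
| add: "f \<in> Tplus n \<Longrightarrow> g \<in> Tplus n \<Longrightarrow> (\<lambda>a. f a + g a) \<in> Tplus n"
| smult: "f \<in> Tplus n \<Longrightarrow> (\<lambda>a. c * f a) \<in> Tplus n"

inductive_set Tplus2 :: "nat \<Rightarrow> ('a::field point \<Rightarrow> 'a) set" for n where
  zero: "(\<lambda>_. 0) \<in> Tplus2 n"
| prod: "f \<in> Tplus n \<Longrightarrow> g \<in> Tplus n \<Longrightarrow> (\<lambda>a. f a * g a) \<in> Tplus2 n"
| add: "f \<in> Tplus2 n \<Longrightarrow> g \<in> Tplus2 n \<Longrightarrow> (\<lambda>a. f a + g a) \<in> Tplus2 n"
| smult: "f \<in> Tplus2 n \<Longrightarrow> (\<lambda>a. c * f a) \<in> Tplus2 n"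

definition equivT :: "nat \<Rightarrow> ('a::field point \<Rightarrow> 'a) \<Rightarrow> ('a point \<Rightarrow> 'a) \<Rightarrow> bool" where
  "equivT n f h \<longleftrightarrow> (\<lambda>a. f a - h a) \<in> Tplus2 n"

end

theory Submission
  imports Defs
begin


lemma oct_eta: "x = Oct (oalpha x) (ou x) (ov x) (obeta x)" by (cases x) simp

lemma O1: "otr (omult x y) = otr (omult y (x::'a::comm_ring oct))"
  by (cases x, cases y) (auto simp: omult_def otr_def dot3_def cross3_def sc3_def add3_def sub3_def split: prod.splits simp: algebra_simps)

lemma O2: "otr (omult (omult x y) z) = otr (omult x (omult y (z::'a::comm_ring oct)))"
  by (cases x, cases y, cases z) (auto simp: omult_def otr_def dot3_def cross3_def sc3_def add3_def sub3_def split: prod.splits simp: algebra_simps)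

lemma O3: "otr (omult (omult x y) z) + otr (omult (omult y x) z) = otr x * otr (omult y z) + otr y * otr (omult x z) - (otr x * otr y - otr (omult x y)) * otr (z::'a::comm_ring oct)"
  by (cases x, cases y, cases z) (auto simp: omult_def otr_def dot3_def cross3_def sc3_def add3_def sub3_def split: prod.splits simp: algebra_simps)

lemma O5: "otr (omult (omult x x) z) = otr x * otr (omult x z) - onorm x * otr (z::'a::comm_ring oct)"
  by (cases x, cases z) (auto simp: omult_def otr_def onorm_def dot3_def cross3_def sc3_def add3_def sub3_def split: prod.splits simp: algebra_simps)

lemma O4: "otr (omult (omult a (omult b c)) z) + otr (omult (omult b (omult a c)) z) = otr a * otr (omult (omult b c) z) + otr b * otr (omult (omult a c) z) - (otr a * otr b - otr (omult a b)) * otr (omult c (z::'a::comm_ring oct))"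
  by (cases a, cases b, cases c, cases z) (auto simp: omult_def otr_def dot3_def cross3_def sc3_def add3_def sub3_def split: prod.splits simp: algebra_simps)


lemma osmult_mult: "omult (osmult s x) (osmult t y) = osmult (s*t) (omult x (y::'a::comm_ring oct))"
  by (cases x, cases y) (auto simp: omult_def osmult_def dot3_def cross3_def sc3_def add3_def sub3_def split: prod.splits simp: algebra_simps)
lemma otr_smult: "otr (osmult t x) = t * otr (x::'a::comm_ring oct)"
  by (cases x) (auto simp: otr_def osmult_def algebra_simps)
lemma onorm_smult: "onorm (osmult t x) = t^2 * onorm (x::'a::comm_ring_1 oct)"
  by (cases x) (auto simp: onorm_def osmult_def dot3_def sc3_def power2_eq_square split: prod.splits simp: algebra_simps)



lemma trw_app: "trw w a = otr (oeval a w)" by (simp add: trw_def)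

lemma deg_Var[simp]: "deg (Var i) = 1" by (simp add: deg_def)
lemma deg_Mul[simp]: "deg (Mul u v) = deg u + deg v" by (simp add: deg_def)
lemma deg_pos: "0 < deg w" by (induction w) auto

lemma oeval_scale: "oeval (\<lambda>i. osmult t (a i)) w = osmult (t ^ deg w) (oeval (a :: 'a::comm_ring_1 point) (w::word))"
  by (induction w) (auto simp: osmult_mult power_add)

abbreviation ok :: "nat \<Rightarrow> word \<Rightarrow> bool" where
  "ok n w \<equiv> set (letters w) \<subseteq> {1..n}"

lemma hom_trw: "homogeneous (deg w) (trw w :: 'a::field point \<Rightarrow> 'a)"
  by (simp add: homogeneous_def trw_def oeval_scale otr_smult)

lemma tr_Tplus: "ok n w \<Longrightarrow> (trw w :: 'a::field point \<Rightarrow> 'a) \<in> Tplus n"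
  by (rule Tplus.hom[OF Tn.trgen deg_pos hom_trw])

lemma nrm_Tplus: "1 \<le> i \<Longrightarrow> i \<le> n \<Longrightarrow> (\<lambda>a. onorm (a i) :: 'a::field) \<in> Tplus n"
  by (rule Tplus.hom[OF Tn.normgen, of _ _ 2]) (auto simp: homogeneous_def onorm_smult)

lemma Tplus_diff: "f \<in> Tplus n \<Longrightarrow> g \<in> Tplus n \<Longrightarrow> (\<lambda>a. f a - g a) \<in> Tplus n"
  using Tplus.add[OF _ Tplus.smult[of g n "-1"], of f] by simp

lemma N_Tplus: assumes "ok n u" "ok n v"
  shows "(\<lambda>a. trw u a * trw v a - trw (Mul u v) a :: 'a::field) \<in> Tplus n"
proof -
  have "(\<lambda>a. trw u a * trw v a :: 'a) \<in> Tn n"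
    using assms by (intro Tn.mult Tn.trgen)
  moreover have "homogeneous (deg u + deg v) (\<lambda>a. trw u a * trw v a :: 'a)"
    by (simp add: homogeneous_def trw_def oeval_scale otr_smult power_add algebra_simps)
  ultimately have "(\<lambda>a. trw u a * trw v a :: 'a) \<in> Tplus n"
    using deg_pos[of u] by (intro Tplus.hom) auto
  moreover have "ok n (Mul u v)" using assms by simp
  ultimately show ?thesis by (intro Tplus_diff tr_Tplus)
qed

lemma T2_diff: "f \<in> Tplus2 n \<Longrightarrow> g \<in> Tplus2 n \<Longrightarrow> (\<lambda>a. f a - g a) \<in> Tplus2 n"
  using Tplus2.add[OF _ Tplus2.smult[of g n "-1"], of f] by simp

lemma T2_mult: "f \<in> Tplus n \<Longrightarrow> g \<in> Tplus n \<Longrightarrow> (\<lambda>a. f a * g a) \<in> Tplus2 n"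
  by (rule Tplus2.prod)

lemma T2_cong: "f \<in> Tplus2 n \<Longrightarrow> g = f \<Longrightarrow> g \<in> Tplus2 n" by simp

lemma eqv_intro: "(\<lambda>a. f a - h a) \<in> Tplus2 n \<Longrightarrow> equivT n f h" by (simp add: equivT_def)

lemma eqv_refl: "equivT n f f"
  by (simp add: equivT_def Tplus2.zero)

lemma eqv_eq: "f = g \<Longrightarrow> equivT n f g"
  by (simp add: eqv_refl)

lemma eqv_cong: "equivT n f g \<Longrightarrow> g = g' \<Longrightarrow> equivT n f g'" by simp

lemma eqv_trans: assumes "equivT n f (\<lambda>a. s * g a)" "equivT n g (\<lambda>a. t * h a)"
  shows "equivT n f (\<lambda>a. (s * t) * h a :: 'a::field)"
proof -
  have "(\<lambda>a. (f a - s * g a) + (\<lambda>a. s * (g a - t * h a)) a) \<in> Tplus2 n"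
    using assms unfolding equivT_def by (intro Tplus2.add Tplus2.smult)
  then show ?thesis unfolding equivT_def by (simp add: algebra_simps)
qed

lemma eqv_trans1: assumes "equivT n f g" "equivT n g (\<lambda>a. t * h a)"
  shows "equivT n f (\<lambda>a. t * h a :: 'a::field)"
  using eqv_trans[of n f 1 g t h] assms by simp

lemma eqv_1: "equivT n f g \<Longrightarrow> equivT n f (\<lambda>a. 1 * g a)" by simp


definition Pr :: "nat \<Rightarrow> word \<Rightarrow> word \<Rightarrow> 'a::field \<Rightarrow> bool" where
  "Pr n X Y s \<longleftrightarrow> (\<forall>Z. ok n Z \<longrightarrow> equivT n (trw (Mul X Z) :: 'a point \<Rightarrow> 'a) (\<lambda>a. s * trw (Mul Y Z) a))"

lemma Pr_C: assumes "ok n u" "ok n v" shows "Pr n (Mul u v) (Mul v u) (-1 :: 'a::field)"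
  unfolding Pr_def
proof (intro allI impI)
  fix Z assume Z: "ok n Z"
  let ?N = "\<lambda>a. trw u a * trw v a - trw (Mul u v) a :: 'a"
  have "(\<lambda>a. (\<lambda>a. (\<lambda>a. trw u a * trw (Mul v Z) a) a + (\<lambda>a. trw v a * trw (Mul u Z) a) a) a
      - (\<lambda>a. ?N a * trw Z a) a) \<in> Tplus2 n"
    using assms Z by (intro T2_diff Tplus2.add T2_mult N_Tplus tr_Tplus) auto
  moreover have "(\<lambda>x. trw (Mul (Mul u v) Z) x - - 1 * trw (Mul (Mul v u) Z) x) = (\<lambda>x. trw u x * trw (Mul v Z) x + trw v x * trw (Mul u Z) x - ?N x * trw Z x)"
  proof (rule ext)
    fix x :: "'a point"
    show "trw (Mul (Mul u v) Z) x - - 1 * trw (Mul (Mul v u) Z) x = trw u x * trw (Mul v Z) x + trw v x * trw (Mul u Z) x - ?N x * trw Z x"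
      using O3[of "oeval x u" "oeval x v" "oeval x Z"] by (simp add: trw_def algebra_simps)
  qed
  ultimately show "equivT n (trw (Mul (Mul u v) Z) :: 'a point \<Rightarrow> 'a) (\<lambda>a. - 1 * trw (Mul (Mul v u) Z) a)"
    unfolding equivT_def by simp
qed

lemma Pr_E: assumes "ok n a" "ok n b" "ok n c"
  shows "Pr n (Mul a (Mul b c)) (Mul b (Mul a c)) (-1 :: 'a::field)"
  unfolding Pr_def
proof (intro allI impI)
  fix Z assume Z: "ok n Z"
  let ?N = "\<lambda>x. trw a x * trw b x - trw (Mul a b) x :: 'a"
  have "(\<lambda>x. (\<lambda>x. (\<lambda>x. trw a x * trw (Mul (Mul b c) Z) x) x + (\<lambda>x. trw b x * trw (Mul (Mul a c) Z) x) x) x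
      - (\<lambda>x. ?N x * trw (Mul c Z) x) x) \<in> Tplus2 n"
    using assms Z by (intro T2_diff Tplus2.add T2_mult N_Tplus tr_Tplus) auto
  moreover have "(\<lambda>x. trw (Mul (Mul a (Mul b c)) Z) x - - 1 * trw (Mul (Mul b (Mul a c)) Z) x) = (\<lambda>x. trw a x * trw (Mul (Mul b c) Z) x + trw b x * trw (Mul (Mul a c) Z) x - ?N x * trw (Mul c Z) x)"
  proof (rule ext)
    fix x :: "'a point"
    show "trw (Mul (Mul a (Mul b c)) Z) x - - 1 * trw (Mul (Mul b (Mul a c)) Z) x = trw a x * trw (Mul (Mul b c) Z) x + trw b x * trw (Mul (Mul a c) Z) x - ?N x * trw (Mul c Z) x"
      using O4[of "oeval x a" "oeval x b" "oeval x c" "oeval x Z"] by (simp add: trw_def algebra_simps)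
  qed
  ultimately show "equivT n (trw (Mul (Mul a (Mul b c)) Z) :: 'a point \<Rightarrow> 'a) (\<lambda>x. - 1 * trw (Mul (Mul b (Mul a c)) Z) x)"
    unfolding equivT_def by simp
qed

lemma Pr_trans: "Pr n X Y s \<Longrightarrow> Pr n Y W t \<Longrightarrow> Pr n X W (s * t)"
  unfolding Pr_def using eqv_trans by blast

lemma Pr_F: assumes "ok n a" "ok n b" "ok n c"
  shows "Pr n (Mul a (Mul b c)) (Mul (Mul a c) b) (1 :: 'a::field)"
  using Pr_trans[OF Pr_E[OF assms] Pr_C[where n=n and u=b and v="Mul a c"]] assms by simp

lemma Pr_step: assumes "Pr n X Y s" "c \<in> {1..n}"
  shows "Pr n (Mul X (Var c)) (Mul Y (Var c)) s"
  unfolding Pr_def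
proof (intro allI impI)
  fix Z assume Z: "ok n Z"
  have e: "\<And>W. trw (Mul (Mul W (Var c)) Z) = (trw (Mul W (Mul (Var c) Z)) :: 'a point \<Rightarrow> 'a)"
    by (auto simp: trw_def O2)
  show "equivT n (trw (Mul (Mul X (Var c)) Z)) (\<lambda>a. s * trw (Mul (Mul Y (Var c)) Z) a)"
    unfolding e using assms Z unfolding Pr_def by auto
qed

definition Lw :: "word \<Rightarrow> nat list \<Rightarrow> word" where
  "Lw u cs = foldl (\<lambda>w j. Mul w (Var j)) u cs"

lemma Lw_Nil[simp]: "Lw u [] = u" by (simp add: Lw_def)
lemma Lw_Cons[simp]: "Lw u (c # cs) = Lw (Mul u (Var c)) cs" by (simp add: Lw_def)
lemma Lw_snoc[simp]: "Lw u (cs @ [c]) = Mul (Lw u cs) (Var c)" by (simp add: Lw_def)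
lemma Lw_append: "Lw u (cs @ ds) = Lw (Lw u cs) ds" by (simp add: Lw_def)
lemma lnword_Lw: "lnword (i # is) = Lw (Var i) is" by (simp add: Lw_def)
lemma letters_Lw[simp]: "letters (Lw u cs) = letters u @ cs"
  by (induction cs arbitrary: u) auto

lemma Pr_lift: "Pr n X Y s \<Longrightarrow> set cs \<subseteq> {1..n} \<Longrightarrow> Pr n (Lw X cs) (Lw Y cs) s"
proof (induction cs arbitrary: X Y)
  case (Cons c cs)
  have "Pr n (Mul X (Var c)) (Mul Y (Var c)) s" using Cons.prems by (intro Pr_step) auto
  then show ?case using Cons by simp
qed simp

lemma Pr_lift2: assumes "Pr n X Y s" "set cs \<subseteq> {1..n}" "cs \<noteq> []"
  shows "equivT n (trw (Lw X cs)) (\<lambda>a. s * trw (Lw Y cs) a)"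
proof -
  obtain ds c where cs: "cs = ds @ [c]" using assms(3) by (cases cs rule: rev_cases) auto
  have "Pr n (Lw X ds) (Lw Y ds) s" using assms cs by (intro Pr_lift) auto
  then show ?thesis using assms cs unfolding Pr_def by auto
qed


fun phi :: "word \<Rightarrow> nat" where
  "phi (Var i) = 0"
| "phi (Mul u v) = phi u + phi v + (deg v - 1)"

lemma phi_Lw[simp]: "phi (Lw u cs) = phi u"
  by (induction cs arbitrary: u) auto

lemma spine: "(\<exists>i cs. w = Lw (Var i) cs) \<or> (\<exists>v1 s t cs. w = Lw (Mul v1 (Mul s t)) cs)"
proof (induction w)
  case (Var i) then show ?case by (metis Lw_Nil)
next
  case (Mul u v)
  show ?case
  proof (cases v)
    case (Var j)
    from Mul.IH(1) show ?thesis
    proof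
      assume "\<exists>i cs. u = Lw (Var i) cs"
      then obtain i cs where "u = Lw (Var i) cs" by blast
      then have "Mul u v = Lw (Var i) (cs @ [j])" using Var by simp
      then show ?thesis by blast
    next
      assume "\<exists>v1 s t cs. u = Lw (Mul v1 (Mul s t)) cs"
      then obtain v1 s t cs where "u = Lw (Mul v1 (Mul s t)) cs" by blast
      then have "Mul u v = Lw (Mul v1 (Mul s t)) (cs @ [j])" using Var by simp
      then show ?thesis by blast
    qed
  next
    case (Mul s t)
    then have "Mul u v = Lw (Mul u (Mul s t)) []" by simp
    then show ?thesis by blast
  qed
qed

lemma lemR: "ok n w \<Longrightarrow> \<exists>\<pi> (s::'a::field). s \<in> {1,-1} \<and> \<pi> \<noteq> [] \<and> mset \<pi> = mset (letters w)
   \<and> equivT n (trw w) (\<lambda>a. s * trw (lnword \<pi>) a)"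
proof (induction "phi w" arbitrary: w rule: less_induct)
  case less
  from spine[of w] show ?case
  proof
    assume "\<exists>i cs. w = Lw (Var i) cs"
    then obtain i cs where w: "w = Lw (Var i) cs" by blast
    show ?thesis
      by (rule exI[of _ "i # cs"], rule exI[of _ 1]) (simp add: w eqv_refl, simp add: Lw_def eqv_refl)
  next
    assume "\<exists>v1 s t cs. w = Lw (Mul v1 (Mul s t)) cs"
    then obtain v1 s t cs where w: "w = Lw (Mul v1 (Mul s t)) cs" by blast
    show ?thesis
    proof (cases "cs = []")
      case True
      let ?w = "Mul (Mul v1 s) t"
      have e: "trw w = (trw ?w :: 'a point \<Rightarrow> 'a)" using True w by (auto simp: trw_def O2)
      have "phi ?w < phi w" using True w deg_pos[of t] deg_pos[of s] by simp
      moreover have "ok n ?w" using less.prems True w by auto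
      ultimately obtain \<pi> and s' :: 'a where "s' \<in> {1,-1}" "\<pi> \<noteq> []" "mset \<pi> = mset (letters ?w)"
        "equivT n (trw ?w) (\<lambda>a. s' * trw (lnword \<pi>) a)" using less.hyps by blast
      then show ?thesis using True w e by (intro exI[of _ \<pi>] exI[of _ s']) auto
    next
      case False
      let ?w = "Lw (Mul (Mul v1 t) s) cs"
      have oks: "ok n v1" "ok n s" "ok n t" "set cs \<subseteq> {1..n}" using less.prems w by auto
      have e: "equivT n (trw w) (\<lambda>a. 1 * trw ?w a :: 'a)"
        unfolding w by (rule Pr_lift2[OF Pr_F[OF oks(1-3)] oks(4) False])
      have "phi ?w < phi w" using w deg_pos[of t] deg_pos[of s] by simp
      moreover have "ok n ?w" using less.prems w by auto
      ultimately obtain \<pi> and s' :: 'a where "s' \<in> {1,-1}" "\<pi> \<noteq> []" "mset \<pi> = mset (letters ?w)"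
        "equivT n (trw ?w) (\<lambda>a. s' * trw (lnword \<pi>) a)" using less.hyps by blast
      moreover then have "equivT n (trw w) (\<lambda>a. (1 * s') * trw (lnword \<pi>) a)" using eqv_trans[OF e] by blast
      ultimately show ?thesis using w by (intro exI[of _ \<pi>] exI[of _ s']) auto
    qed
  qed
qed


lemma tr_rot2: "trw (Mul (Mul P X) Y) = (trw (Mul (Mul X Y) P) :: 'a::comm_ring point \<Rightarrow> 'a)"
  by (auto simp: trw_def O2 O1[of "oeval _ P"])

lemma tr_rot3: "trw (Mul (Mul (Mul P X) Y) Z) = (trw (Mul (Mul X (Mul Y Z)) P) :: 'a::comm_ring point \<Rightarrow> 'a)"
  by (auto simp: trw_def O2 O1[of "oeval _ P"])

lemma Pr_swap2: assumes "ok n P" "x \<in> {1..n}" "y \<in> {1..n}"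
  shows "Pr n (Mul (Mul P (Var x)) (Var y)) (Mul (Mul P (Var y)) (Var x)) (-1 :: 'a::field)"
  unfolding Pr_def
proof (intro allI impI)
  fix Z assume Z: "ok n Z"
  have "Pr n (Mul (Var x) (Mul (Var y) Z)) (Mul (Var y) (Mul (Var x) Z)) (-1 :: 'a)"
    using assms Z by (intro Pr_E) auto
  then show "equivT n (trw (Mul (Mul (Mul P (Var x)) (Var y)) Z)) (\<lambda>a. (-1::'a) * trw (Mul (Mul (Mul P (Var y)) (Var x)) Z) a)"
    unfolding tr_rot3 Pr_def using assms by auto
qed

lemma Adj: assumes "set (pre@[x,y]@rest) \<subseteq> {1..n}" "length (pre@[x,y]@rest) \<ge> 3"
  shows "equivT n (trw (lnword (pre@[x,y]@rest))) (\<lambda>a. (-1::'a::field) * trw (lnword (pre@[y,x]@rest)) a)"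
proof (cases pre)
  case Nil
  then have r: "rest \<noteq> []" using assms by auto
  have "Pr n (Mul (Var x) (Var y)) (Mul (Var y) (Var x)) (-1::'a)" using assms by (intro Pr_C) auto
  from Pr_lift2[OF this _ r] assms Nil show ?thesis by (simp add: Lw_def)
next
  case (Cons p pre')
  let ?P = "Lw (Var p) pre'"
  have e: "\<And>x y. lnword (pre@[x,y]@rest) = Lw (Mul (Mul ?P (Var x)) (Var y)) rest"
    using Cons by (simp add: Lw_def)
  have okP: "ok n ?P" using assms Cons by auto
  show ?thesis
  proof (cases "rest = []")
    case True
    have "Pr n (Mul (Var x) (Var y)) (Mul (Var y) (Var x)) (-1::'a)" using assms by (intro Pr_C) auto
    then have "equivT n (trw (Mul (Mul (Var x) (Var y)) ?P)) (\<lambda>a. (-1::'a) * trw (Mul (Mul (Var y) (Var x)) ?P) a)"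
      using okP unfolding Pr_def by blast
    then show ?thesis using True unfolding e by (simp only: Lw_Nil tr_rot2)
  next
    case False
    have "Pr n (Mul (Mul ?P (Var x)) (Var y)) (Mul (Mul ?P (Var y)) (Var x)) (-1::'a)"
      using assms okP by (intro Pr_swap2) auto
    from Pr_lift2[OF this _ False] assms show ?thesis unfolding e by auto
  qed
qed


lemma upt_split3: "Suc i < k \<Longrightarrow> [0..<k] = [0..<i] @ [i, Suc i] @ [Suc (Suc i)..<k]"
proof -
  assume a: "Suc i < k"
  have "[0..<k] = [0..<i] @ [i..<k]" using upt_add_eq_append[of 0 i "k - i"] a by simp
  also have "[i..<k] = i # Suc i # [Suc (Suc i)..<k]" using a by (simp add: upt_conv_Cons)
  finally show ?thesis by simp
qed

lemma TG1: assumes "Suc i < k" "3 \<le> k" "\<forall>m<k. h m \<in> {1..n}"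
  shows "equivT n (trw (lnword (map (h \<circ> Transposition.transpose i (Suc i)) [0..<k])))
     (\<lambda>a. (-1::'a::field) * trw (lnword (map h [0..<k])) a)"
proof -
  let ?pre = "map h [0..<i]" and ?rest = "map h [Suc (Suc i)..<k]"
  have e1: "map h [0..<k] = ?pre @ [h i, h (Suc i)] @ ?rest" using upt_split3[OF assms(1)] by simp
  have e2: "map (h \<circ> Transposition.transpose i (Suc i)) [0..<k] = ?pre @ [h (Suc i), h i] @ ?rest"
    using upt_split3[OF assms(1)] by simp
  have "set (?pre @ [h (Suc i), h i] @ ?rest) \<subseteq> {1..n}" using assms(1,3) by auto
  moreover have "length (?pre @ [h (Suc i), h i] @ ?rest) \<ge> 3" using assms by simp
  ultimately show ?thesis unfolding e1 e2 by (rule Adj)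
qed

lemma TG: assumes "i < j" "j < k" "3 \<le> k" "\<forall>m<k. h m \<in> {1..n}"
  shows "equivT n (trw (lnword (map (h \<circ> Transposition.transpose i j) [0..<k])))
     (\<lambda>a. (-1::'a::field) * trw (lnword (map h [0..<k])) a)"
proof -
  define d where "d = j - i - 1"
  have j: "j = i + Suc d" using assms(1) unfolding d_def by simp
  have "\<forall>i h. i + Suc d < k \<longrightarrow> (\<forall>m<k. h m \<in> {1..n}) \<longrightarrow>
     equivT n (trw (lnword (map (h \<circ> Transposition.transpose i (i + Suc d)) [0..<k])))
     (\<lambda>a. (-1::'a::field) * trw (lnword (map h [0..<k])) a)"
  proof (induction d)
    case 0
    show ?case
    proof (intro allI impI)
      fix i and h :: "nat \<Rightarrow> nat" assume "i + Suc 0 < k" "\<forall>m<k. h m \<in> {1..n}"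
      then show "equivT n (trw (lnword (map (h \<circ> Transposition.transpose i (i + Suc 0)) [0..<k])))
        (\<lambda>a. (-1::'a) * trw (lnword (map h [0..<k])) a)" using TG1[OF _ assms(3), of i h n] by simp
    qed
  next
    case (Suc d)
    show ?case
    proof (intro allI impI)
      fix i and h :: "nat \<Rightarrow> nat" assume a: "i + Suc (Suc d) < k" "\<forall>m<k. h m \<in> {1..n}"
      let ?t = "Transposition.transpose i (Suc i)"
      let ?h1 = "h \<circ> ?t"
      let ?h2 = "?h1 \<circ> Transposition.transpose (Suc i) (i + Suc (Suc d))"
      have ik: "Suc i < k" using a by simp
      have tk: "\<And>m c. m < k \<Longrightarrow> c < k \<Longrightarrow> Transposition.transpose (Suc i) c m < k"
        "\<And>m. m < k \<Longrightarrow> ?t m < k" using ik by (simp_all add: transpose_def)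
      have v1: "\<forall>m<k. ?h1 m \<in> {1..n}"
      proof (intro allI impI)
        fix m assume "m < k"
        then have "?t m < k" by (rule tk(2))
        then show "?h1 m \<in> {1..n}" using a(2) by simp
      qed
      have v2: "\<forall>m<k. ?h2 m \<in> {1..n}"
      proof (intro allI impI)
        fix m assume "m < k"
        then have "Transposition.transpose (Suc i) (i + Suc (Suc d)) m < k" using tk(1) a by simp
        then show "?h2 m \<in> {1..n}" using v1 by simp
      qed
      have comp: "h \<circ> Transposition.transpose i (i + Suc (Suc d)) = ?h2 \<circ> ?t"
        using transpose_comp_triple[of i "i + Suc (Suc d)" "Suc i"] by (simp add: comp_assoc)
      have A: "equivT n (trw (lnword (map (?h2 \<circ> ?t) [0..<k]))) (\<lambda>a. (-1::'a) * trw (lnword (map ?h2 [0..<k])) a)"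
        by (rule TG1[OF _ assms(3) v2]) (use a in simp)
      have B: "equivT n (trw (lnword (map ?h2 [0..<k]))) (\<lambda>a. (-1::'a) * trw (lnword (map ?h1 [0..<k])) a)"
      proof -
        have "Suc i + Suc d < k" using a by simp
        then have "equivT n (trw (lnword (map (?h1 \<circ> Transposition.transpose (Suc i) (Suc i + Suc d)) [0..<k]))) (\<lambda>a. (-1::'a) * trw (lnword (map ?h1 [0..<k])) a)"
          using Suc.IH v1 by blast
        moreover have "Suc i + Suc d = i + Suc (Suc d)" by simp
        ultimately show ?thesis by simp
      qed
      have C: "equivT n (trw (lnword (map ?h1 [0..<k]))) (\<lambda>a. (-1::'a) * trw (lnword (map h [0..<k])) a)"
        by (rule TG1[OF _ assms(3) a(2)]) (use a in simp)
      have "equivT n (trw (lnword (map (?h2 \<circ> ?t) [0..<k]))) (\<lambda>a. ((-1::'a) * -1 * -1) * trw (lnword (map h [0..<k])) a)"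
        by (rule eqv_trans[OF eqv_trans[OF A B] C])
      then show "equivT n (trw (lnword (map (h \<circ> Transposition.transpose i (i + Suc (Suc d))) [0..<k])))
         (\<lambda>a. (-1::'a) * trw (lnword (map h [0..<k])) a)" unfolding comp by simp
    qed
  qed
  note H = this[rule_format, of i h]
  show ?thesis unfolding j by (rule H) (use assms j in auto)
qed


lemma G: assumes "p permutes {..<k}" "3 \<le> k" "\<forall>m<k. h m \<in> {1..n}"
  shows "equivT n (trw (lnword (map (h \<circ> p) [0..<k])))
     (\<lambda>a. (of_int (sign p) :: 'a::field) * trw (lnword (map h [0..<k])) a)"
  using finite_lessThan[of k] assms(1)
proof (induction p rule: permutes_rev_induct)
  case id
  then show ?case by (simp add: eqv_refl)
next
  case (swap a b p)
  define c where "c = min a b"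
  define d where "d = max a b"
  have cd: "c < d" "d < k" using swap.hyps(1-3) unfolding c_def d_def by auto
  have t: "Transposition.transpose a b = Transposition.transpose c d"
    unfolding c_def d_def by (cases "a \<le> b") (auto simp: min_def max_def transpose_commute)
  have v: "\<forall>m<k. (h \<circ> p) m \<in> {1..n}"
    using assms(3) permutes_in_image[OF swap.hyps(4)] by auto
  have A: "equivT n (trw (lnword (map ((h \<circ> p) \<circ> Transposition.transpose c d) [0..<k])))
     (\<lambda>x. (-1::'a) * trw (lnword (map (h \<circ> p) [0..<k])) x)"
    by (rule TG[OF cd assms(2) v])
  have B: "equivT n (trw (lnword (map (h \<circ> (p \<circ> Transposition.transpose a b)) [0..<k])))
     (\<lambda>x. ((-1::'a) * of_int (sign p)) * trw (lnword (map h [0..<k])) x)"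
    using eqv_trans[OF A swap.IH] unfolding t by (simp add: comp_assoc)
  have perm: "permutation p" using swap.hyps(4) permutation_permutes by blast
  have "sign (p \<circ> Transposition.transpose a b) = sign p * -1"
    using sign_compose[OF perm permutation_swap_id] swap.hyps(3) by (simp add: sign_swap_id)
  then have "(of_int (sign (p \<circ> Transposition.transpose a b)) :: 'a) = (-1::'a) * of_int (sign p)" by simp
  then show ?case using B by (simp only:)
qed


lemma P2: assumes "mset l' = mset l" "set l \<subseteq> {1..n}" "length l \<ge> 3"
  shows "\<exists>s\<in>{1,-1}. equivT n (trw (lnword l')) (\<lambda>a. (s::'a::field) * trw (lnword l) a)"
proof -
  obtain p where p: "p permutes {..<length l}" "permute_list p l = l'"
    using mset_eq_permutation[OF assms(1)] by blast
  have v: "\<forall>m<length l. l ! m \<in> {1..n}" using assms(2) nth_mem by blast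
  have "equivT n (trw (lnword (map ((!) l \<circ> p) [0..<length l])))
     (\<lambda>a. (of_int (sign p) :: 'a) * trw (lnword (map ((!) l) [0..<length l])) a)"
    by (rule G[OF p(1) assms(3) v])
  moreover have "map ((!) l \<circ> p) [0..<length l] = l'" using p(2) by (simp add: permute_list_def o_def)
  moreover have "map ((!) l) [0..<length l] = l" by (rule map_nth)
  moreover have "(of_int (sign p) :: 'a) \<in> {1,-1}" by (simp add: sign_def)
  ultimately show ?thesis by auto
qed

lemma small: assumes "mset l' = mset l" "length l \<le> 2"
  shows "trw (lnword l') = (trw (lnword l) :: 'a::comm_ring point \<Rightarrow> 'a)"
proof -
  have len: "length l' = length l" using assms(1) by (metis size_mset)
  consider "length l = 0" | "length l = 1" | "length l = 2" using assms(2) by linarith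
  then show ?thesis
  proof cases
    case 1 then show ?thesis using len by simp
  next
    case 2
    then obtain x where "l = [x]" by (metis One_nat_def length_0_conv length_Suc_conv)
    moreover obtain y where "l' = [y]" using 2 len by (metis One_nat_def length_0_conv length_Suc_conv)
    ultimately show ?thesis using assms(1) by simp
  next
    case 3
    then obtain x y where l: "l = [x, y]" by (metis length_0_conv length_Suc_conv numeral_2_eq_2)
    obtain u v where l': "l' = [u, v]" using 3 len by (metis length_0_conv length_Suc_conv numeral_2_eq_2)
    have "(u = x \<and> v = y) \<or> (u = y \<and> v = x)" using assms(1) l l' by (auto simp: add_eq_conv_diff)
    then show ?thesis using l l' by (auto simp: trw_def O1)
  qed
qed

lemma Z0: assumes "set (x#x#rest) \<subseteq> {1..n}" "rest \<noteq> []"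
  shows "equivT n (trw (lnword (x#x#rest))) (\<lambda>_. 0 :: 'a::field)"
proof -
  have "Pr n (Mul (Var x) (Var x)) (Mul (Var x) (Var x)) (0::'a)"
    unfolding Pr_def
  proof (intro allI impI)
    fix Z assume Z: "ok n Z"
    have "(\<lambda>a. (\<lambda>a. trw (Var x) a * trw (Mul (Var x) Z) a) a - (\<lambda>a. onorm (a x) * trw Z a) a :: 'a) \<in> Tplus2 n"
      using assms Z by (intro T2_diff T2_mult tr_Tplus nrm_Tplus) auto
    moreover have "(\<lambda>a. trw (Mul (Mul (Var x) (Var x)) Z) a - 0 * trw (Mul (Mul (Var x) (Var x)) Z) a) =
       (\<lambda>a. (\<lambda>a. trw (Var x) a * trw (Mul (Var x) Z) a) a - (\<lambda>a. onorm (a x) * trw Z a) a :: 'a)"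
      by (auto simp: trw_def O5)
    ultimately show "equivT n (trw (Mul (Mul (Var x) (Var x)) Z)) (\<lambda>a. (0::'a) * trw (Mul (Mul (Var x) (Var x)) Z) a)"
      unfolding equivT_def by simp
  qed
  from Pr_lift2[OF this _ assms(2)] assms show ?thesis by (simp add: Lw_def)
qed

theorem lemma4p2:
  fixes n :: nat
  assumes "alg_closed TYPE('a::field)"
  shows
   "(\<forall>w. set (letters w) \<subseteq> {1..n} \<longrightarrow> \<not> multilinear w \<longrightarrow> deg w > 2 \<longrightarrow>
        equivT n (trw w :: 'a point \<Rightarrow> 'a) (\<lambda>_. 0))
  \<and> (\<forall>w is. set (letters w) \<subseteq> {1..n} \<longrightarrow> multilinear w \<longrightarrow>
        sorted_wrt (<) is \<longrightarrow> set is = set (letters w) \<longrightarrow>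
        (\<exists>s \<in> {1, -1}. equivT n (trw w :: 'a point \<Rightarrow> 'a) (\<lambda>a. s * trl is a)))
  \<and> (\<forall>is \<sigma>. set is \<subseteq> {1..n} \<longrightarrow> sorted_wrt (<) is \<longrightarrow> length is \<ge> 3 \<longrightarrow>
        \<sigma> permutes {..<length is} \<longrightarrow>
        equivT n (trl (map (\<lambda>j. is ! \<sigma> j) [0..<length is]) :: 'a point \<Rightarrow> 'a)
                 (\<lambda>a. of_int (sign \<sigma>) * trl is a))"
proof (intro conjI allI impI)
  fix w assume ok: "set (letters w) \<subseteq> {1..n}" and nm: "\<not> multilinear w" and dg: "deg w > 2"
  obtain \<pi> and s :: 'a where \<pi>: "s \<in> {1,-1}" "\<pi> \<noteq> []" "mset \<pi> = mset (letters w)"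
    "equivT n (trw w) (\<lambda>a. s * trw (lnword \<pi>) a)" using lemR[OF ok] by blast
  have "\<not> distinct \<pi>" using nm \<pi>(3) unfolding multilinear_def
    by (metis mset_eq_imp_distinct_iff)
  then obtain xs ys zs y where \<pi>e: "\<pi> = xs @ [y] @ ys @ [y] @ zs" using not_distinct_decomp by blast
  let ?l0 = "y # y # (xs @ ys @ zs)"
  have m0: "mset \<pi> = mset ?l0" using \<pi>e by simp
  have len: "length \<pi> \<ge> 3" using dg \<pi>(3) unfolding deg_def by (metis Suc_leI numeral_3_eq_3 numeral_2_eq_2 size_mset)
  have set0: "set ?l0 \<subseteq> {1..n}" using ok \<pi>(3) m0 by (metis mset_eq_setD)
  have len0: "length ?l0 \<ge> 3" using len m0 by (metis size_mset)
  obtain s' :: 'a where s': "equivT n (trw (lnword \<pi>)) (\<lambda>a. s' * trw (lnword ?l0) a)"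
    using P2[OF m0 set0 len0] by blast
  have "xs @ ys @ zs \<noteq> []" using len0 by auto
  then have "equivT n (trw (lnword ?l0)) (\<lambda>a. (1::'a) * (\<lambda>_. 0) a)" using Z0[OF set0] by simp
  from eqv_trans[OF eqv_trans[OF \<pi>(4) s'] this]
  show "equivT n (trw w :: 'a point \<Rightarrow> 'a) (\<lambda>_. 0)" by simp
next
  fix w and "is" :: "nat list"
  assume ok: "set (letters w) \<subseteq> {1..n}" and ml: "multilinear w" and so: "sorted_wrt (<) is"
    and st: "set is = set (letters w)"
  obtain \<pi> and s :: 'a where \<pi>: "s \<in> {1,-1}" "\<pi> \<noteq> []" "mset \<pi> = mset (letters w)"
    "equivT n (trw w) (\<lambda>a. s * trw (lnword \<pi>) a)" using lemR[OF ok] by blast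
  have d1: "distinct (letters w)" using ml by (simp add: multilinear_def)
  have d2: "distinct is" using so by (simp add: strict_sorted_iff)
  have mi: "mset \<pi> = mset is" using \<pi>(3) set_eq_iff_mset_eq_distinct[OF d2 d1] st by simp
  have seti: "set is \<subseteq> {1..n}" using ok st by simp
  show "\<exists>s \<in> {1, -1}. equivT n (trw w :: 'a point \<Rightarrow> 'a) (\<lambda>a. s * trl is a)"
  proof (cases "length is \<ge> 3")
    case True
    obtain s' :: 'a where s': "s' \<in> {1,-1}" "equivT n (trw (lnword \<pi>)) (\<lambda>a. s' * trw (lnword is) a)"
      using P2[OF mi seti True] by blast
    have "equivT n (trw w) (\<lambda>a. (s * s') * trw (lnword is) a)" by (rule eqv_trans[OF \<pi>(4) s'(2)])
    moreover have "s * s' \<in> {1,-1}" using \<pi>(1) s'(1) by auto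
    ultimately show ?thesis unfolding trl_def by blast
  next
    case False
    then have "trw (lnword \<pi>) = (trw (lnword is) :: 'a point \<Rightarrow> 'a)" using small[OF mi] by simp
    then show ?thesis using \<pi>(1,4) unfolding trl_def by auto
  qed
next
  fix "is" :: "nat list" and \<sigma>
  assume seti: "set is \<subseteq> {1..n}" and len: "length is \<ge> 3" and p: "\<sigma> permutes {..<length is}"
  have v: "\<forall>m<length is. is ! m \<in> {1..n}" using seti nth_mem by blast
  have "equivT n (trw (lnword (map ((!) is \<circ> \<sigma>) [0..<length is])))
     (\<lambda>a. (of_int (sign \<sigma>) :: 'a) * trw (lnword (map ((!) is) [0..<length is])) a)"
    by (rule G[OF p len v])
  then show "equivT n (trl (map (\<lambda>j. is ! \<sigma> j) [0..<length is]) :: 'a point \<Rightarrow> 'a)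
                 (\<lambda>a. of_int (sign \<sigma>) * trl is a)"
    unfolding trl_def by (simp add: o_def map_nth)
qed

end
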